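(* As formal power series in $z,q$, $$\sum_{n\geq 1}\sum_{j\geq 0}FD_{j,2}(n)z^jq^n=\frac{q(1-(1-z)q)}{1-2q+(1-z)q^3}=\sum_{n\geq 1}\sum_{j\geq 0}FO_{j,2}(n)z^jq^n .$$
   Context: A partition is a finite nonincreasing sequence of positive integers (its parts); its size is not fixed. The perimeter of a partition with largest part $\alpha$ and $\lambda$ parts is $\alpha+\lambda-1$. $FO_{j,2}(n)$ is the number of partitions of perimeter $n$ having exactly $j$ distinct even part sizes; $FD_{j,2}(n)$ is the number of partitions of perimeter $n$ having exactly $j$ distinct part sizes that each appear at least $2$ times. *)

theory Defs
  imports "HOL-Computational_Algebra.Computational_Algebra"
begin

definition is_partition :: "nat list \<Rightarrow> bool" where
  "is_partition p \<longleftrightarrow> sorted (rev p) \<and> (\<forall>x\<in>set p. 0 < x)"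

(* perimeter = largest part + number of parts - 1; only defined for nonempty partitions *)
definition perim_partitions :: "nat \<Rightarrow> nat list set" where
  "perim_partitions n = {p. is_partition p \<and> p \<noteq> [] \<and> hd p + length p - 1 = n}"

definition FO2 :: "nat \<Rightarrow> nat \<Rightarrow> nat" where
  "FO2 j n = card {p \<in> perim_partitions n. card {x \<in> set p. even x} = j}"

definition FD2 :: "nat \<Rightarrow> nat \<Rightarrow> nat" where
  "FD2 j n = card {p \<in> perim_partitions n. card {x \<in> set p. 2 \<le> count_list p x} = j}"

(* bivariate generating series: fps in q with polynomial coefficients in z *)
definition bigf :: "(nat \<Rightarrow> nat \<Rightarrow> nat) \<Rightarrow> int poly fps" where
  "bigf F = Abs_fps (\<lambda>n. if 1 \<le> n then (\<Sum>j\<in>{j. F j n \<noteq> 0}. of_nat (F j n) * [:0, 1:] ^ j) else 0)"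

definition zpoly :: "int poly fps" where
  "zpoly = fps_const [:0, 1:]"

end

theory Submission
  imports Defs
begin

abbreviation zz :: "int poly" where "zz \<equiv> [:0, 1:]"

lemma is_partition_alt: "is_partition p \<longleftrightarrow> sorted_wrt (\<ge>) p \<and> (\<forall>x\<in>set p. 0 < x)"
  unfolding is_partition_def sorted_wrt_rev by simp

lemma is_partition_Cons: "is_partition (x # r) \<longleftrightarrow> (\<forall>y\<in>set r. y \<le> x) \<and> 0 < x \<and> is_partition r"
  unfolding is_partition_alt by auto

lemma is_partition_Nil[simp]: "is_partition []" by (simp add: is_partition_def)

lemma perim_finite: "finite (perim_partitions n)"
proof -
  have "perim_partitions n \<subseteq> {xs. set xs \<subseteq> {0..n} \<and> length xs \<le> n}"
  proof
    fix p assume "p \<in> perim_partitions n"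
    then obtain x r where p: "p = x # r" "is_partition (x#r)" "x + length r = n"
      unfolding perim_partitions_def by (cases p) auto
    then show "p \<in> {xs. set xs \<subseteq> {0..n} \<and> length xs \<le> n}"
      using is_partition_Cons[of x r] by auto
  qed
  then show ?thesis using finite_subset finite_lists_length_le[of "{0..n}" n] by blast
qed

lemma perim_0: "perim_partitions 0 = {}"
  unfolding perim_partitions_def is_partition_alt by (auto simp: neq_Nil_conv)

lemma perim_1: "perim_partitions 1 = {[1]}"
  unfolding perim_partitions_def
  apply (auto simp: neq_Nil_conv is_partition_Cons)
  subgoal for y ys by (cases ys) auto
  done

definition Nm :: "nat list \<Rightarrow> nat list" where "Nm p = hd p # p"
definition Em :: "nat list \<Rightarrow> nat list" where "Em p = Suc (hd p) # tl p"

lemma perim_split: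
  assumes "n \<ge> 1"
  shows "perim_partitions (Suc n) = Nm ` perim_partitions n \<union> Em ` perim_partitions n"
proof (intro equalityI subsetI)
  fix q assume "q \<in> perim_partitions (Suc n)"
  then obtain x r where q: "q = x # r" "is_partition (x#r)" "x + length r = Suc n"
    unfolding perim_partitions_def by (cases q) auto
  have r: "\<forall>y\<in>set r. y \<le> x" "0 < x" "is_partition r" using q(2) is_partition_Cons by auto
  show "q \<in> Nm ` perim_partitions n \<union> Em ` perim_partitions n"
  proof (cases "r \<noteq> [] \<and> hd r = x")
    case True
    then have "r \<in> perim_partitions n" using q r unfolding perim_partitions_def
      by (cases r) auto
    moreover have "q = Nm r" using True q unfolding Nm_def by auto
    ultimately show ?thesis by blast
  next
    case False
    have x2: "x \<ge> 2"
    proof (rule ccontr)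
      assume "\<not> x \<ge> 2"
      then have "x = 1" using r by auto
      show False
      proof (cases r)
        case Nil then show False using q assms \<open>x = 1\<close> by auto
      next
        case (Cons y s)
        then have "y = 1" using r \<open>x = 1\<close> is_partition_Cons[of y s] by auto
        then show False using False Cons \<open>x = 1\<close> by auto
      qed
    qed
    have "\<forall>y\<in>set r. y \<le> x - 1"
    proof
      fix y assume y: "y \<in> set r"
      then obtain u s where rs: "r = u # s" by (cases r) auto
      have "u < x" using False rs r by auto
      moreover have "y \<le> u" using y rs r(3) is_partition_Cons[of u s] by auto
      ultimately show "y \<le> x - 1" by auto
    qed
    then have "(x - 1) # r \<in> perim_partitions n" using q r x2
      unfolding perim_partitions_def by (auto simp: is_partition_Cons)
    moreover have "q = Em ((x - 1) # r)" using q x2 unfolding Em_def by auto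
    ultimately show ?thesis by blast
  qed
next
  fix q assume "q \<in> Nm ` perim_partitions n \<union> Em ` perim_partitions n"
  then obtain p where p: "p \<in> perim_partitions n" "q = Nm p \<or> q = Em p" by blast
  then obtain x r where pr: "p = x # r" "is_partition (x#r)" "x + length r = n"
    unfolding perim_partitions_def by (cases p) auto
  have r: "\<forall>y\<in>set r. y \<le> x" "0 < x" "is_partition r" using pr(2) is_partition_Cons by auto
  show "q \<in> perim_partitions (Suc n)"
    using p(2) pr r unfolding perim_partitions_def Nm_def Em_def
    by (auto simp: is_partition_Cons le_SucI)
qed

lemma sum_split:
  assumes "n \<ge> 1"
  shows "(\<Sum>q\<in>perim_partitions (Suc n). g q) = (\<Sum>p\<in>perim_partitions n. g (Nm p) + g (Em p))"
proof -
  let ?P = "perim_partitions n"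
  have ne: "\<And>p. p \<in> ?P \<Longrightarrow> p \<noteq> []" unfolding perim_partitions_def by auto
  have i1: "inj_on Nm ?P" unfolding inj_on_def Nm_def by auto
  have i2: "inj_on Em ?P" unfolding inj_on_def Em_def
    by (metis ne list.collapse list.inject nat.inject)
  have d: "Nm ` ?P \<inter> Em ` ?P = {}"
  proof -
    { fix p p' assume pp: "p \<in> ?P" "p' \<in> ?P" "Nm p = Em p'"
      then obtain x r where pr: "p' = x # r" "is_partition (x#r)"
        unfolding perim_partitions_def by (cases p') auto
      have "Suc x = hd p" "p = r" using pp(3) pr unfolding Nm_def Em_def by auto
      then have "r \<noteq> [] \<and> hd r = Suc x" using ne[OF pp(1)] by auto
      then have False using pr(2) is_partition_Cons[of x r] by (cases r) auto }
    then show ?thesis by blast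
  qed
  have "(\<Sum>q\<in>perim_partitions (Suc n). g q) = sum g (Nm ` ?P) + sum g (Em ` ?P)"
    unfolding perim_split[OF assms] by (rule sum.union_disjoint) (use perim_finite d in auto)
  also have "\<dots> = (\<Sum>p\<in>?P. g (Nm p)) + (\<Sum>p\<in>?P. g (Em p))"
    by (simp add: sum.reindex[OF i1, of g] sum.reindex[OF i2, of g] o_def)
  finally show ?thesis by (simp add: sum.distrib)
qed

definition fD :: "nat list \<Rightarrow> nat" where
  "fD p = card {x \<in> set p. 2 \<le> count_list p x}"
definition fO :: "nat list \<Rightarrow> nat" where
  "fO p = card {x \<in> set p. even x}"

lemma gD: "{y \<in> set (x#r). 2 \<le> count_list (x#r) y}
   = ({y \<in> set r. 2 \<le> count_list r y} - {x}) \<union> (if 1 \<le> count_list r x then {x} else {})"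
  using count_list_0_iff[of r x] by (auto split: if_splits)

lemma fD_cons: "fD (x#r) = card ({y \<in> set r. 2 \<le> count_list r y} - {x}) + (if 1 \<le> count_list r x then 1 else 0)"
  unfolding fD_def gD by (subst card_Un_disjoint) auto

lemma fD_NN: "fD (x#x#r) = card ({y \<in> set r. 2 \<le> count_list r y} - {x}) + 1"
proof -
  have "fD (x#x#r) = card ({y \<in> set (x#r). 2 \<le> count_list (x#r) y} - {x}) + 1"
    using fD_cons[of x "x#r"] by simp
  also have "{y \<in> set (x#r). 2 \<le> count_list (x#r) y} - {x} = {y \<in> set r. 2 \<le> count_list r y} - {x}"
    unfolding gD by auto
  finally show ?thesis .
qed

lemma fD_E: assumes "\<forall>y\<in>set r. y \<le> x"
  shows "fD (Suc x#r) = card ({y \<in> set r. 2 \<le> count_list r y} - {x}) + (if 2 \<le> count_list r x then 1 else 0)"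
proof -
  have ns: "Suc x \<notin> set r" using assms by auto
  have "fD (Suc x#r) = card {y \<in> set r. 2 \<le> count_list r y}"
    unfolding fD_def gD using ns count_list_0_iff[of r "Suc x"] by auto
  also have "{y \<in> set r. 2 \<le> count_list r y} = ({y \<in> set r. 2 \<le> count_list r y} - {x}) \<union> (if 2 \<le> count_list r x then {x} else {})"
    using count_list_0_iff[of r x] by (auto split: if_splits)
  finally show ?thesis by (subst (asm) card_Un_disjoint) auto
qed

lemma gO: "{y \<in> set (x#r). even y} = ({y \<in> set r. even y} - {x}) \<union> (if even x then {x} else {})"
  by auto

lemma fO_cons: "fO (x#r) = card ({y \<in> set r. even y} - {x}) + (if even x then 1 else 0)"
  unfolding fO_def gO by (subst card_Un_disjoint) auto

lemma fO_NN: "fO (x#x#r) = fO (x#r)"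
  unfolding fO_def by simp

lemma fO_E: assumes "\<forall>y\<in>set r. y \<le> x"
  shows "fO (Suc x#r) = card ({y \<in> set r. even y} - {x}) + (if even x \<and> x \<in> set r then 1 else 0) + (if odd x then 1 else 0)"
proof -
  have ns: "Suc x \<notin> set r" using assms by auto
  have "fO (Suc x#r) = card {y \<in> set r. even y} + (if odd x then 1 else 0)"
    using fO_cons[of "Suc x" r] ns by auto
  also have "{y \<in> set r. even y} = ({y \<in> set r. even y} - {x}) \<union> (if even x \<and> x \<in> set r then {x} else {})"
    by auto
  finally show ?thesis by (subst (asm) card_Un_disjoint) auto
qed

lemma perim_cons: "p \<in> perim_partitions n \<Longrightarrow> \<exists>x r. p = x # r \<and> (\<forall>y\<in>set r. y \<le> x)"
  unfolding perim_partitions_def by (cases p) (auto simp: is_partition_Cons)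

lemma D_eqs: assumes "\<forall>y\<in>set r. y \<le> x"
  obtains K where "fD (x#x#r) = K + 1" "fD (Suc x#r) = K + (if 2 \<le> count_list r x then 1 else 0)"
    "fD (x#r) = K + (if 1 \<le> count_list r x then 1 else 0)" "count_list r (Suc x) = 0"
  using fD_NN[of x r] fD_E[OF assms] fD_cons[of x r] assms count_list_0_iff[of r "Suc x"] by force

lemma O_eqs: assumes "\<forall>y\<in>set r. y \<le> x"
  obtains K where "fO (x#x#r) = fO (x#r)" "fO (Suc x#r) = K + (if even x \<and> x \<in> set r then 1 else 0) + (if odd x then 1 else 0)"
    "fO (x#r) = K + (if even x then 1 else 0)" "Suc x \<notin> set r"
  using fO_NN[of x r] fO_E[OF assms] fO_cons[of x r] assms by force

lemma D_eA: assumes "\<forall>y\<in>set r. y \<le> x"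
  shows "zz^fD (x#x#r) + zz^fD (Suc x#r) = 2*zz^fD (x#r) + (zz-1)*(if count_list r x = 0 then zz^fD (x#r) else 0)
     + (1-zz)*(if count_list r x = 1 then zz^(fD (x#r) - 1) else 0)"
proof -
  obtain K where e: "fD (x#x#r) = K + 1" "fD (Suc x#r) = K + (if 2 \<le> count_list r x then 1 else 0)"
    "fD (x#r) = K + (if 1 \<le> count_list r x then 1 else 0)" "count_list r (Suc x) = 0"
    using D_eqs[OF assms] by blast
  show ?thesis unfolding e by (cases "count_list r x = 0"; cases "count_list r x = 1") (auto simp: algebra_simps)
qed

lemma D_eS: assumes "\<forall>y\<in>set r. y \<le> x"
  shows "(if count_list (x#r) x = 0 then zz^fD (x#x#r) else 0) + (if count_list r (Suc x) = 0 then zz^fD (Suc x#r) else 0)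
    = zz^fD (x#r) + (1-zz)*(if count_list r x = 1 then zz^(fD (x#r) - 1) else 0)"
proof -
  obtain K where e: "fD (x#x#r) = K + 1" "fD (Suc x#r) = K + (if 2 \<le> count_list r x then 1 else 0)"
    "fD (x#r) = K + (if 1 \<le> count_list r x then 1 else 0)" "count_list r (Suc x) = 0"
    using D_eqs[OF assms] by blast
  show ?thesis unfolding e by (cases "count_list r x = 0"; cases "count_list r x = 1") (auto simp: algebra_simps)
qed

lemma D_eT: assumes "\<forall>y\<in>set r. y \<le> x"
  shows "(if count_list (x#r) x = 1 then zz^(fD (x#x#r) - 1) else 0) + (if count_list r (Suc x) = 1 then zz^(fD (Suc x#r) - 1) else 0)
    = (if count_list r x = 0 then zz^fD (x#r) else 0)"
proof -
  obtain K where e: "fD (x#x#r) = K + 1" "fD (Suc x#r) = K + (if 2 \<le> count_list r x then 1 else 0)"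
    "fD (x#r) = K + (if 1 \<le> count_list r x then 1 else 0)" "count_list r (Suc x) = 0"
    using D_eqs[OF assms] by blast
  show ?thesis unfolding e by (cases "count_list r x = 0"; cases "count_list r x = 1") (auto simp: algebra_simps)
qed

lemma O_eA: assumes "\<forall>y\<in>set r. y \<le> x"
  shows "zz^fO (x#x#r) + zz^fO (Suc x#r) = 2*zz^fO (x#r) + (zz-1)*(if odd x then zz^fO (x#r) else 0)
     + (1-zz)*(if even x \<and> x \<notin> set r then zz^(fO (x#r) - 1) else 0)"
proof -
  obtain K where e: "fO (x#x#r) = fO (x#r)" "fO (Suc x#r) = K + (if even x \<and> x \<in> set r then 1 else 0) + (if odd x then 1 else 0)"
    "fO (x#r) = K + (if even x then 1 else 0)" "Suc x \<notin> set r"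
    using O_eqs[OF assms] by blast
  show ?thesis unfolding e by (cases "even x"; cases "x \<in> set r") (auto simp: algebra_simps)
qed

lemma O_eS: assumes "\<forall>y\<in>set r. y \<le> x"
  shows "(if odd x then zz^fO (x#x#r) else 0) + (if odd (Suc x) then zz^fO (Suc x#r) else 0)
    = zz^fO (x#r) + (1-zz)*(if even x \<and> x \<notin> set r then zz^(fO (x#r) - 1) else 0)"
proof -
  obtain K where e: "fO (x#x#r) = fO (x#r)" "fO (Suc x#r) = K + (if even x \<and> x \<in> set r then 1 else 0) + (if odd x then 1 else 0)"
    "fO (x#r) = K + (if even x then 1 else 0)" "Suc x \<notin> set r"
    using O_eqs[OF assms] by blast
  show ?thesis unfolding e by (cases "even x"; cases "x \<in> set r") (auto simp: algebra_simps)
qed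

lemma O_eT: assumes "\<forall>y\<in>set r. y \<le> x"
  shows "(if even x \<and> x \<notin> set (x#r) then zz^(fO (x#x#r) - 1) else 0)
     + (if even (Suc x) \<and> Suc x \<notin> set r then zz^(fO (Suc x#r) - 1) else 0)
    = (if odd x then zz^fO (x#r) else 0)"
proof -
  obtain K where e: "fO (x#x#r) = fO (x#r)" "fO (Suc x#r) = K + (if even x \<and> x \<in> set r then 1 else 0) + (if odd x then 1 else 0)"
    "fO (x#r) = K + (if even x then 1 else 0)" "Suc x \<notin> set r"
    using O_eqs[OF assms] by blast
  show ?thesis using e(4) unfolding e by (cases "even x"; cases "x \<in> set r") (auto simp: algebra_simps)
qed

lemma lift:
  assumes "n \<ge> 1" "\<And>x r. \<forall>y\<in>set r. y \<le> x \<Longrightarrow> g (x#x#r) + g (Suc x # r) = h (x#r)"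
  shows "(\<Sum>q\<in>perim_partitions (Suc n). g q) = (\<Sum>p\<in>perim_partitions n. h p)"
  unfolding sum_split[OF assms(1)]
proof (rule sum.cong)
  fix p assume "p \<in> perim_partitions n"
  then obtain x r where "p = x # r" "\<forall>y\<in>set r. y \<le> x" using perim_cons by blast
  then show "g (Nm p) + g (Em p) = h p" using assms(2) unfolding Nm_def Em_def by simp
qed simp

definition aS :: "(nat list \<Rightarrow> nat) \<Rightarrow> nat \<Rightarrow> int poly" where
  "aS f n = (\<Sum>p\<in>perim_partitions n. zz^f p)"
definition SD :: "nat \<Rightarrow> int poly" where
  "SD n = (\<Sum>p\<in>perim_partitions n. if count_list (tl p) (hd p) = 0 then zz^fD p else 0)"
definition TD :: "nat \<Rightarrow> int poly" where
  "TD n = (\<Sum>p\<in>perim_partitions n. if count_list (tl p) (hd p) = 1 then zz^(fD p - 1) else 0)"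
definition SO :: "nat \<Rightarrow> int poly" where
  "SO n = (\<Sum>p\<in>perim_partitions n. if odd (hd p) then zz^fO p else 0)"
definition TO :: "nat \<Rightarrow> int poly" where
  "TO n = (\<Sum>p\<in>perim_partitions n. if even (hd p) \<and> hd p \<notin> set (tl p) then zz^(fO p - 1) else 0)"

lemma D_A: "n \<ge> 1 \<Longrightarrow> aS fD (Suc n) = 2 * aS fD n + (zz - 1) * SD n + (1 - zz) * TD n"
  unfolding aS_def SD_def TD_def
  apply (subst lift[where h = "\<lambda>p. 2*zz^fD p + (zz-1)*(if count_list (tl p) (hd p) = 0 then zz^fD p else 0)
     + (1-zz)*(if count_list (tl p) (hd p) = 1 then zz^(fD p - 1) else 0)"])
     
  apply simp
  subgoal for x r unfolding list.sel by (rule D_eA)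
  by (simp add: sum.distrib sum_distrib_left)

lemma D_S: "n \<ge> 1 \<Longrightarrow> SD (Suc n) = aS fD n + (1 - zz) * TD n"
  unfolding aS_def SD_def TD_def
  apply (subst lift[where h = "\<lambda>p. zz^fD p + (1-zz)*(if count_list (tl p) (hd p) = 1 then zz^(fD p - 1) else 0)"])
     
  apply simp
  subgoal for x r unfolding list.sel by (rule D_eS)
  by (simp add: sum.distrib sum_distrib_left)

lemma D_T: "n \<ge> 1 \<Longrightarrow> TD (Suc n) = SD n"
  unfolding SD_def TD_def
  apply (subst lift[where h = "\<lambda>p. if count_list (tl p) (hd p) = 0 then zz^fD p else 0"])
     
  apply simp
  subgoal for x r unfolding list.sel by (rule D_eT)
  by simp

lemma O_A: "n \<ge> 1 \<Longrightarrow> aS fO (Suc n) = 2 * aS fO n + (zz - 1) * SO n + (1 - zz) * TO n"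
  unfolding aS_def SO_def TO_def
  apply (subst lift[where h = "\<lambda>p. 2*zz^fO p + (zz-1)*(if odd (hd p) then zz^fO p else 0)
     + (1-zz)*(if even (hd p) \<and> hd p \<notin> set (tl p) then zz^(fO p - 1) else 0)"])
     
  apply simp
  subgoal for x r unfolding list.sel by (rule O_eA)
  by (simp add: sum.distrib sum_distrib_left)

lemma O_S: "n \<ge> 1 \<Longrightarrow> SO (Suc n) = aS fO n + (1 - zz) * TO n"
  unfolding aS_def SO_def TO_def
  apply (subst lift[where h = "\<lambda>p. zz^fO p + (1-zz)*(if even (hd p) \<and> hd p \<notin> set (tl p) then zz^(fO p - 1) else 0)"])
     
  apply simp
  subgoal for x r unfolding list.sel by (rule O_eS)
  by (simp add: sum.distrib sum_distrib_left)

lemma O_T: "n \<ge> 1 \<Longrightarrow> TO (Suc n) = SO n"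
  unfolding SO_def TO_def
  apply (subst lift[where h = "\<lambda>p. if odd (hd p) then zz^fO p else 0"])
     
  apply simp
  subgoal for x r unfolding list.sel by (rule O_eT)
  by simp

lemma base_D: "aS fD 1 = 1" "SD 1 = 1" "TD 1 = 0"
  unfolding aS_def SD_def TD_def perim_1 fD_def by auto

lemma fO_1: "fO [Suc 0] = 0"
proof -
  have "{x \<in> set [Suc 0]. even x} = {}" by auto
  then show ?thesis unfolding fO_def by simp
qed

lemma base_O: "aS fO 1 = 1" "SO 1 = 1" "TO 1 = 0"
  unfolding aS_def SO_def TO_def perim_1 by (auto simp: fO_1)

lemma rec_abs:
  fixes a S T :: "nat \<Rightarrow> int poly"
  assumes A: "\<And>n. n \<ge> 1 \<Longrightarrow> a (Suc n) = 2 * a n + (zz - 1) * S n + (1 - zz) * T n"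
    and B: "\<And>n. n \<ge> 1 \<Longrightarrow> S (Suc n) = a n + (1 - zz) * T n"
    and C: "\<And>n. n \<ge> 1 \<Longrightarrow> T (Suc n) = S n"
    and a1: "a 1 = 1" and s1: "S 1 = 1" and t1: "T 1 = 0"
  shows "a 2 = 1 + zz" "a 3 = 2 * a 2" "\<And>n. n \<ge> 4 \<Longrightarrow> a n = 2 * a (n-1) - (1 - zz) * a (n-3)"
proof -
  show "a 2 = 1 + zz" using A[of 1] a1 s1 t1 by (simp add: numeral_2_eq_2 algebra_simps)
  have s2: "S 2 = 1" using B[of 1] a1 t1 by (simp add: numeral_2_eq_2)
  have t2: "T 2 = 1" using C[of 1] s1 by (simp add: numeral_2_eq_2)
  show "a 3 = 2 * a 2" using A[of 2] s2 t2 by (simp add: numeral_3_eq_3 numeral_2_eq_2 algebra_simps)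
  fix n :: nat assume "n \<ge> 4"
  define k where "k = n - 4"
  have n: "n = Suc (Suc (Suc (Suc k)))" using \<open>n \<ge> 4\<close> unfolding k_def by simp
  have e1: "a (Suc (k+3)) = 2 * a (k+3) + (zz - 1) * S (k+3) + (1 - zz) * T (k+3)" by (rule A) simp
  have e2: "T (Suc (k+2)) = S (k+2)" by (rule C) simp
  have e3: "S (Suc (k+2)) = a (k+2) + (1 - zz) * T (k+2)" by (rule B) simp
  have e4: "S (Suc (k+1)) = a (k+1) + (1 - zz) * T (k+1)" by (rule B) simp
  have e5: "T (Suc (k+1)) = S (k+1)" by (rule C) simp
  have e6: "a (Suc (k+1)) = 2 * a (k+1) + (zz - 1) * S (k+1) + (1 - zz) * T (k+1)" by (rule A) simp
  have "a (Suc (k+3)) = 2 * a (k+3) - (1 - zz) * a (k+1)"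
  proof -
    have x: "Suc (k+3) = k+4" "Suc (k+2) = k+3" "Suc (k+1) = k+2" by simp_all
    show ?thesis using e1 e2 e3 e4 e5 e6 unfolding x by algebra
  qed
  then show "a n = 2 * a (n-1) - (1 - zz) * a (n-3)" unfolding n by (simp add: eval_nat_numeral)
qed

lemma bigf_nth:
  assumes F: "\<And>j n. F j n = card {p \<in> perim_partitions n. f p = j}"
  shows "bigf F $ n = (if 1 \<le> n then aS f n else 0)"
proof (cases "1 \<le> n")
  case True
  let ?P = "perim_partitions n"
  have fin: "finite ?P" by (rule perim_finite)
  have set: "{j. F j n \<noteq> 0} = f ` ?P"
  proof (intro equalityI subsetI)
    fix j assume "j \<in> {j. F j n \<noteq> 0}"
    then have "card {p \<in> ?P. f p = j} \<noteq> 0" using F by auto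
    then have "{p \<in> ?P. f p = j} \<noteq> {}" by (metis card.empty)
    then show "j \<in> f ` ?P" by auto
  next
    fix j assume "j \<in> f ` ?P"
    then have "{p \<in> ?P. f p = j} \<noteq> {}" by auto
    then show "j \<in> {j. F j n \<noteq> 0}" using F fin by auto
  qed
  have "aS f n = (\<Sum>j\<in>f ` ?P. \<Sum>p\<in>{p \<in> ?P. f p = j}. zz^f p)"
    unfolding aS_def by (rule sum.image_gen[OF fin])
  also have "\<dots> = (\<Sum>j\<in>f ` ?P. of_nat (F j n) * zz^j)"
  proof (rule sum.cong)
    fix j assume "j \<in> f ` ?P"
    have "(\<Sum>p\<in>{p \<in> ?P. f p = j}. zz^f p) = (\<Sum>p\<in>{p \<in> ?P. f p = j}. zz^j)" by (rule sum.cong) auto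
    then show "(\<Sum>p\<in>{p \<in> ?P. f p = j}. zz^f p) = of_nat (F j n) * zz^j" using F by simp
  qed simp
  finally have e: "aS f n = (\<Sum>j\<in>f ` ?P. of_nat (F j n) * zz^j)" .
  have "bigf F $ n = (\<Sum>j\<in>{j. F j n \<noteq> 0}. of_nat (F j n) * zz^j)"
    using True unfolding bigf_def by simp
  also have "\<dots> = aS f n" unfolding e set ..
  finally show ?thesis using True by simp
qed (simp add: bigf_def)

lemma fps_final:
  fixes B :: "int poly fps" and a :: "nat \<Rightarrow> int poly"
  assumes Bn: "\<And>n. B $ n = (if 1 \<le> n then a n else 0)"
    and a1: "a 1 = 1" and a2: "a 2 = 1 + zz" and a3: "a 3 = 2 * a 2"
    and ar: "\<And>n. n \<ge> 4 \<Longrightarrow> a n = 2 * a (n-1) - (1 - zz) * a (n-3)"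
  shows "B * (1 - 2 * fps_X + (1 - zpoly) * fps_X ^ 3) = fps_X * (1 - (1 - zpoly) * fps_X)"
proof -
  have c: "1 - zpoly = fps_const (1 - zz)" by (simp add: zpoly_def fps_const_sub)
  have L: "B * (1 - 2 * fps_X + (1 - zpoly) * fps_X ^ 3) = B - B*fps_X^1 - B*fps_X^1 + fps_const (1 - zz) * (B*fps_X^3)"
    unfolding c by (simp add: algebra_simps mult_2)
  have R: "fps_X * (1 - (1 - zpoly) * fps_X) = fps_X^1 - fps_const (1 - zz) * fps_X^2"
    unfolding c by (simp add: algebra_simps power2_eq_square)
  show ?thesis unfolding L R
  proof (rule fps_ext)
    fix k
    show "(B - B*fps_X^1 - B*fps_X^1 + fps_const (1 - zz) * (B*fps_X^3)) $ k = (fps_X^1 - fps_const (1 - zz) * fps_X^2) $ k"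
    proof (cases "k \<ge> 4")
      case True
      have k3: "1 \<le> k - 3" "1 \<le> k - 1" "1 \<le> k" "\<not> k < 3" "\<not> k < 1" using True by auto
      show ?thesis unfolding fps_sub_nth fps_add_nth fps_mult_left_const_nth fps_X_power_mult_right_nth fps_X_power_nth Bn
        using ar[OF True] k3 True by (simp add: algebra_simps)
    next
      case False
      then have "k = 0 \<or> k = 1 \<or> k = 2 \<or> k = 3" by auto
      then show ?thesis using a1 a2 a3
        unfolding fps_sub_nth fps_add_nth fps_mult_left_const_nth fps_X_power_mult_right_nth fps_X_power_nth Bn
        by (auto simp: algebra_simps)
    qed
  qed
qed

theorem mainTheorem4:
  shows "bigf FD2 * (1 - 2 * fps_X + (1 - zpoly) * fps_X ^ 3) = fps_X * (1 - (1 - zpoly) * fps_X)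
       \<and> bigf FO2 * (1 - 2 * fps_X + (1 - zpoly) * fps_X ^ 3) = fps_X * (1 - (1 - zpoly) * fps_X)"
proof
  have bD: "\<And>n. bigf FD2 $ n = (if 1 \<le> n then aS fD n else 0)"
    by (rule bigf_nth) (simp add: FD2_def fD_def)
  note rD = rec_abs[of "aS fD" SD TD, OF D_A D_S D_T base_D]
  show "bigf FD2 * (1 - 2 * fps_X + (1 - zpoly) * fps_X ^ 3) = fps_X * (1 - (1 - zpoly) * fps_X)"
    by (rule fps_final[OF bD base_D(1) rD])
next
  have bO: "\<And>n. bigf FO2 $ n = (if 1 \<le> n then aS fO n else 0)"
    by (rule bigf_nth) (simp add: FO2_def fO_def)
  note rO = rec_abs[of "aS fO" SO TO, OF O_A O_S O_T base_O]
  show "bigf FO2 * (1 - 2 * fps_X + (1 - zpoly) * fps_X ^ 3) = fps_X * (1 - (1 - zpoly) * fps_X)"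
    by (rule fps_final[OF bO base_O(1) rO])
qed

end
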